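(* For all integers $m\ge 2$ and $k\ge 2$, $h(K(m,2,\ldots,2))=ch(K(m,2,\ldots,2))$, where $K(m,2,\ldots,2)$ denotes the complete $k$-partite graph with one part of size $m$ and $k-1$ parts of size $2$.
   Context: All graphs are finite and simple. A list assignment $L$ to a graph $G$ assigns a finite set $L(v)$ to each vertex $v$; a proper $L$-coloring is a map $\psi$ with $\psi(v)\in L(v)$ for all $v$ and $\psi(u)\ne\psi(v)$ for every edge $uv$. The choice number $ch(G)$ is the least $k$ such that $G$ is properly $L$-colorable whenever $|L(v)|\ge k$ for all $v$. For a subgraph $H$ of $G$ and a color $\sigma$, let $H_\sigma$ denote the subgraph of $H$ induced by $\{v\in V(H):\sigma\in L(v)\}$, and let $\alpha$ denote the independence number (with $\alpha$ of the null graph equal to $0$). $G$ and $L$ satisfy Hall's condition if $\sum_{\sigma}\alpha(H_\sigma)\ge |V(H)|$ for every subgraph $H$ of $G$, the sum being over all colors. The Hall number $h(G)$ is the smallest positive integer $k$ such that $G$ has a proper $L$-coloring whenever $G$ and $L$ satisfy Hall's condition and $|L(v)|\ge k$ for every $v\in V(G)$. *)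

theory Defs
  imports Main
begin

definition simple_graph :: "'a set \<Rightarrow> 'a set set \<Rightarrow> bool" where
  "simple_graph V E \<longleftrightarrow> finite V \<and> (\<forall>e\<in>E. e \<subseteq> V \<and> card e = 2)"

definition subgraph :: "'a set \<Rightarrow> 'a set set \<Rightarrow> 'a set \<Rightarrow> 'a set set \<Rightarrow> bool" where
  "subgraph W F V E \<longleftrightarrow> W \<subseteq> V \<and> F \<subseteq> E \<and> (\<forall>e\<in>F. e \<subseteq> W)"

definition independent :: "'a set set \<Rightarrow> 'a set \<Rightarrow> bool" where
  "independent E S \<longleftrightarrow> (\<forall>e\<in>E. \<not> e \<subseteq> S)"

text \<open>Independence number; equals 0 for the null graph.\<close>
definition indep_num :: "'a set \<Rightarrow> 'a set set \<Rightarrow> nat" where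
  "indep_num V E = Max {card S | S. S \<subseteq> V \<and> independent E S}"

definition proper_L_coloring ::
  "'a set \<Rightarrow> 'a set set \<Rightarrow> ('a \<Rightarrow> nat set) \<Rightarrow> ('a \<Rightarrow> nat) \<Rightarrow> bool" where
  "proper_L_coloring V E L \<psi> \<longleftrightarrow>
     (\<forall>v\<in>V. \<psi> v \<in> L v) \<and> (\<forall>u v. {u, v} \<in> E \<longrightarrow> \<psi> u \<noteq> \<psi> v)"

definition L_colorable :: "'a set \<Rightarrow> 'a set set \<Rightarrow> ('a \<Rightarrow> nat set) \<Rightarrow> bool" where
  "L_colorable V E L \<longleftrightarrow> (\<exists>\<psi>. proper_L_coloring V E L \<psi>)"

definition list_assignment_ge :: "'a set \<Rightarrow> ('a \<Rightarrow> nat set) \<Rightarrow> nat \<Rightarrow> bool" where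
  "list_assignment_ge V L k \<longleftrightarrow> (\<forall>v\<in>V. finite (L v) \<and> card (L v) \<ge> k)"

definition choice_number :: "'a set \<Rightarrow> 'a set set \<Rightarrow> nat" where
  "choice_number V E = (LEAST k. \<forall>L. list_assignment_ge V L k \<longrightarrow> L_colorable V E L)"

definition col_verts :: "'a set \<Rightarrow> ('a \<Rightarrow> nat set) \<Rightarrow> nat \<Rightarrow> 'a set" where
  "col_verts W L \<sigma> = {v\<in>W. \<sigma> \<in> L v}"

definition col_edges :: "'a set \<Rightarrow> 'a set set \<Rightarrow> ('a \<Rightarrow> nat set) \<Rightarrow> nat \<Rightarrow> 'a set set" where
  "col_edges W F L \<sigma> = {e\<in>F. e \<subseteq> col_verts W L \<sigma>}"

text \<open>Colours outside the lists of W contribute 0,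
  so the sum is taken over the (finite) union of the lists of W.\<close>
definition hall_condition :: "'a set \<Rightarrow> 'a set set \<Rightarrow> ('a \<Rightarrow> nat set) \<Rightarrow> bool" where
  "hall_condition V E L \<longleftrightarrow>
     (\<forall>W F. subgraph W F V E \<longrightarrow>
        (\<Sum>\<sigma>\<in>(\<Union>v\<in>W. L v). indep_num (col_verts W L \<sigma>) (col_edges W F L \<sigma>)) \<ge> card W)"

definition hall_number :: "'a set \<Rightarrow> 'a set set \<Rightarrow> nat" where
  "hall_number V E = (LEAST k. 0 < k \<and>
     (\<forall>L. hall_condition V E L \<and> list_assignment_ge V L k \<longrightarrow> L_colorable V E L))"

text \<open>K(m,2,...,2) with k parts: part 0 = {(0,i) | i<m}, parts j=1..k-1 = {(j,0),(j,1)};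
  two vertices are adjacent iff they lie in different parts.\<close>
definition Km2_V :: "nat \<Rightarrow> nat \<Rightarrow> (nat \<times> nat) set" where
  "Km2_V m k = {(0, i) | i. i < m} \<union> {(j, i) | j i. 0 < j \<and> j < k \<and> i < 2}"

definition Km2_E :: "nat \<Rightarrow> nat \<Rightarrow> (nat \<times> nat) set set" where
  "Km2_E m k = {{u, v} | u v. u \<in> Km2_V m k \<and> v \<in> Km2_V m k \<and> fst u \<noteq> fst v}"

end

theory Submission imports Defs begin

lemma dc:
  assumes "finite W" "finite U"
  shows "(\<Sum>\<sigma>\<in>U. card {v\<in>W. P v \<sigma>}) = (\<Sum>v\<in>W. card {\<sigma>\<in>U. P v \<sigma>})"
proof -
  have "(\<Sum>\<sigma>\<in>U. card {v\<in>W. P v \<sigma>}) = (\<Sum>\<sigma>\<in>U. \<Sum>v\<in>W. if P v \<sigma> then 1 else 0)"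
    using assms(1) by (simp only: card_eq_sum sum.inter_filter)
  also have "\<dots> = (\<Sum>v\<in>W. \<Sum>\<sigma>\<in>U. if P v \<sigma> then 1 else 0)"
    by (rule sum.swap)
  also have "\<dots> = (\<Sum>v\<in>W. card {\<sigma>\<in>U. P v \<sigma>})"
    using assms(2) by (simp only: card_eq_sum sum.inter_filter)
  finally show ?thesis .
qed

lemma mem_V [simp]: "(j, i) \<in> Km2_V m k \<longleftrightarrow> (j = 0 \<and> i < m) \<or> (0 < j \<and> j < k \<and> i < 2)"
  by (auto simp: Km2_V_def)

lemma mem_V': "v \<in> Km2_V m k \<longleftrightarrow> (fst v = 0 \<and> snd v < m) \<or> (0 < fst v \<and> fst v < k \<and> snd v < 2)"
  by (cases v) simp

lemma finite_V [simp]: "finite (Km2_V m k)"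
proof -
  have "Km2_V m k \<subseteq> {0..<k+1} \<times> {0..<m+2}" by (auto simp: Km2_V_def)
  then show ?thesis by (rule finite_subset) auto
qed

lemma edgeI:
  assumes "u \<in> Km2_V m k" "v \<in> Km2_V m k" "fst u \<noteq> fst v"
  shows "{u, v} \<in> Km2_E m k"
  unfolding Km2_E_def mem_Collect_eq
  apply (rule exI[of _ u], rule exI[of _ v]) using assms by (simp del: mem_V)

lemma edge_iff: "{u, v} \<in> Km2_E m k \<longleftrightarrow> u \<in> Km2_V m k \<and> v \<in> Km2_V m k \<and> fst u \<noteq> fst v"
proof
  assume "{u, v} \<in> Km2_E m k"
  then show "u \<in> Km2_V m k \<and> v \<in> Km2_V m k \<and> fst u \<noteq> fst v"
  proof -
    obtain a b where ab: "{u, v} = {a, b}" "a \<in> Km2_V m k" "b \<in> Km2_V m k" "fst a \<noteq> fst b"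
      using \<open>{u, v} \<in> Km2_E m k\<close> unfolding Km2_E_def mem_Collect_eq by (elim exE conjE) metis
    then have "(u = a \<and> v = b) \<or> (u = b \<and> v = a)" by (simp add: doubleton_eq_iff)
    then show ?thesis using ab by (elim disjE) (simp_all del: mem_V)
  qed
next
  assume "u \<in> Km2_V m k \<and> v \<in> Km2_V m k \<and> fst u \<noteq> fst v"
  then show "{u, v} \<in> Km2_E m k" using edgeI by blast
qed

lemma edge_form: "e \<in> Km2_E m k \<Longrightarrow> \<exists>u v. e = {u, v} \<and> fst u \<noteq> fst v"
  unfolding Km2_E_def mem_Collect_eq by (elim exE conjE) metis

lemma indep_le:
  assumes "finite V" "S \<subseteq> V" "independent E S"
  shows "card S \<le> indep_num V E"
  unfolding indep_num_def
proof (rule Max_ge)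
  have "{card S |S. S \<subseteq> V \<and> independent E S} \<subseteq> card ` Pow V" by auto
  then show "finite {card S |S. S \<subseteq> V \<and> independent E S}"
    using assms(1) by (meson finite_Pow_iff finite_imageI finite_subset)
  show "card S \<in> {card S |S. S \<subseteq> V \<and> independent E S}" using assms by auto
qed


lemma same_part_indep:
  assumes "F \<subseteq> Km2_E m k" "\<forall>u\<in>S. \<forall>v\<in>S. fst u = fst v"
  shows "independent (col_edges W F L \<sigma>) S"
  unfolding independent_def
proof (intro ballI notI)
  fix e assume e: "e \<in> col_edges W F L \<sigma>" and sub: "e \<subseteq> S"
  then have "e \<in> Km2_E m k" using assms(1) by (auto simp: col_edges_def)
  then obtain u v where "e = {u, v}" "fst u \<noteq> fst v" using edge_form by blast
  then show False using sub assms(2) by auto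
qed

lemma hall_col:
  assumes W: "W \<subseteq> Km2_V m k" and F: "F \<subseteq> Km2_E m k" and fin: "\<forall>v\<in>W. finite (L v)"
    and col: "\<forall>v\<in>W. \<psi> v \<in> L v" and prp: "\<forall>u\<in>W. \<forall>v\<in>W. fst u \<noteq> fst v \<longrightarrow> \<psi> u \<noteq> \<psi> v"
  shows "card W \<le> (\<Sum>\<sigma>\<in>(\<Union>v\<in>W. L v). indep_num (col_verts W L \<sigma>) (col_edges W F L \<sigma>))"
proof -
  let ?U = "\<Union>v\<in>W. L v"
  have fW: "finite W" by (rule finite_subset[OF W finite_V])
  have fU: "finite ?U" using fW fin by auto
  have "card W = (\<Sum>v\<in>W. (1::nat))" by simp
  also have "\<dots> = (\<Sum>v\<in>W. card {\<sigma>\<in>?U. \<psi> v = \<sigma>})"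
  proof (rule sum.cong)
    fix v assume "v \<in> W"
    then have "{\<sigma>\<in>?U. \<psi> v = \<sigma>} = {\<psi> v}" using col by auto
    then show "1 = card {\<sigma>\<in>?U. \<psi> v = \<sigma>}" by simp
  qed simp
  also have "\<dots> = (\<Sum>\<sigma>\<in>?U. card {v\<in>W. \<psi> v = \<sigma>})" using dc[OF fW fU] by simp
  also have "\<dots> \<le> (\<Sum>\<sigma>\<in>?U. indep_num (col_verts W L \<sigma>) (col_edges W F L \<sigma>))"
  proof (rule sum_mono)
    fix \<sigma> assume "\<sigma> \<in> ?U"
    show "card {v\<in>W. \<psi> v = \<sigma>} \<le> indep_num (col_verts W L \<sigma>) (col_edges W F L \<sigma>)"
    proof (rule indep_le)
      show "finite (col_verts W L \<sigma>)" using fW by (simp add: col_verts_def)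
      show "{v\<in>W. \<psi> v = \<sigma>} \<subseteq> col_verts W L \<sigma>" using col by (auto simp: col_verts_def)
      show "independent (col_edges W F L \<sigma>) {v\<in>W. \<psi> v = \<sigma>}"
        unfolding independent_def
      proof (intro ballI notI)
        fix e assume e: "e \<in> col_edges W F L \<sigma>" and sub: "e \<subseteq> {v\<in>W. \<psi> v = \<sigma>}"
        then have "e \<in> Km2_E m k" using F by (auto simp: col_edges_def)
        then obtain u v where "e = {u, v}" "fst u \<noteq> fst v" using edge_form by blast
        then show False using sub prp by auto
      qed
    qed
  qed
  finally show ?thesis .
qed

lemma hall_auto:
  assumes k: "k \<ge> 1" and lists: "list_assignment_ge (Km2_V m k) L k"
  shows "hall_condition (Km2_V m k) (Km2_E m k) L"
  unfolding hall_condition_def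
proof (intro allI impI)
  fix W F assume sg: "subgraph W F (Km2_V m k) (Km2_E m k)"
  then have W: "W \<subseteq> Km2_V m k" and F: "F \<subseteq> Km2_E m k" by (auto simp: subgraph_def)
  let ?U = "\<Union>v\<in>W. L v"
  let ?a = "\<lambda>\<sigma>. indep_num (col_verts W L \<sigma>) (col_edges W F L \<sigma>)"
  have fW: "finite W" by (rule finite_subset[OF W finite_V])
  have fin: "\<forall>v\<in>W. finite (L v)" using lists W by (auto simp: list_assignment_ge_def)
  have fU: "finite ?U" using fW fin by auto
  have key: "card (col_verts W L \<sigma>) \<le> k * ?a \<sigma>" for \<sigma>
  proof -
    let ?C = "col_verts W L \<sigma>"
    have fC: "finite ?C" using fW by (simp add: col_verts_def)
    have CV: "?C \<subseteq> Km2_V m k" using W by (auto simp: col_verts_def)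
    have "card ?C = (\<Sum>v\<in>?C. (1::nat))" by simp
    also have "\<dots> = (\<Sum>v\<in>?C. card {j\<in>{..<k}. fst v = j})"
    proof (rule sum.cong)
      fix v assume "v \<in> ?C"
      then have "v \<in> Km2_V m k" using CV by blast
      then have "fst v < k" using k unfolding mem_V' by auto
      then have "{j\<in>{..<k}. fst v = j} = {fst v}" by auto
      then show "1 = card {j\<in>{..<k}. fst v = j}" by simp
    qed simp
    also have "\<dots> = (\<Sum>j<k. card {v\<in>?C. fst v = j})" using dc[OF fC, of "{..<k}"] by simp
    also have "\<dots> \<le> (\<Sum>j<k. ?a \<sigma>)"
    proof (rule sum_mono)
      fix j assume "j \<in> {..<k}"
      show "card {v\<in>?C. fst v = j} \<le> ?a \<sigma>"
        by (rule indep_le[OF fC]) (auto intro!: same_part_indep[OF F])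
    qed
    also have "\<dots> = k * ?a \<sigma>" by simp
    finally show ?thesis .
  qed
  have "k * card W = (\<Sum>v\<in>W. k)" by simp
  also have "\<dots> \<le> (\<Sum>v\<in>W. card (L v))"
    by (rule sum_mono) (use lists W in \<open>auto simp: list_assignment_ge_def\<close>)
  also have "\<dots> = (\<Sum>v\<in>W. card {\<sigma>\<in>?U. \<sigma> \<in> L v})"
  proof (rule sum.cong)
    fix v assume "v \<in> W"
    then have "{\<sigma>\<in>?U. \<sigma> \<in> L v} = L v" by auto
    then show "card (L v) = card {\<sigma>\<in>?U. \<sigma> \<in> L v}" by simp
  qed simp
  also have "\<dots> = (\<Sum>\<sigma>\<in>?U. card {v\<in>W. \<sigma> \<in> L v})" using dc[OF fW fU] by simp
  also have "\<dots> = (\<Sum>\<sigma>\<in>?U. card (col_verts W L \<sigma>))" by (simp add: col_verts_def)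
  also have "\<dots> \<le> (\<Sum>\<sigma>\<in>?U. k * ?a \<sigma>)" by (rule sum_mono) (rule key)
  also have "\<dots> = k * (\<Sum>\<sigma>\<in>?U. ?a \<sigma>)" by (simp add: sum_distrib_left)
  finally have "k * card W \<le> k * (\<Sum>\<sigma>\<in>?U. ?a \<sigma>)" .
  then show "card W \<le> (\<Sum>\<sigma>\<in>?U. ?a \<sigma>)" using k by simp
qed

lemma inj_choice:
  assumes "finite S"
  shows "(\<forall>v\<in>S. finite (L v) \<and> card S \<le> card (L v)) \<Longrightarrow> \<exists>\<psi>. (\<forall>v\<in>S. \<psi> v \<in> L v) \<and> inj_on \<psi> S"
  using assms
proof (induction S rule: finite_induct)
  case empty
  then show ?case by auto
next
  case (insert x S)
  have "\<forall>v\<in>S. finite (L v) \<and> card S \<le> card (L v)"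
    using insert.prems insert.hyps by auto
  then obtain \<psi> where p: "\<forall>v\<in>S. \<psi> v \<in> L v" "inj_on \<psi> S" using insert.IH by blast
  have fx: "finite (L x)" and cx: "card (insert x S) \<le> card (L x)" using insert.prems by auto
  have "\<not> L x \<subseteq> \<psi> ` S"
  proof
    assume "L x \<subseteq> \<psi> ` S"
    then have "card (L x) \<le> card (\<psi> ` S)" using insert.hyps(1) by (simp add: card_mono)
    also have "\<dots> \<le> card S" by (rule card_image_le[OF insert.hyps(1)])
    finally show False using cx insert.hyps by simp
  qed
  then obtain c where c: "c \<in> L x" "c \<notin> \<psi> ` S" by blast
  let ?\<phi> = "\<psi>(x := c)"
  have "\<forall>v\<in>insert x S. ?\<phi> v \<in> L v" using p c by auto
  moreover have "inj_on ?\<phi> (insert x S)"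
    using p c insert.hyps(2) by (auto simp: inj_on_def)
  ultimately show ?case by blast
qed

definition L0 :: "nat \<Rightarrow> nat \<times> nat \<Rightarrow> nat set" where
  "L0 k v = (if fst v = 0 then (if snd v = 0 then {1..k} else insert (k+1) {1..k-1})
             else (if snd v = 0 then {1..k-1} else {2..k+1}))"

lemma L0_uncol:
  assumes m: "m \<ge> 2" and k: "k \<ge> 2"
  shows "\<not> L_colorable (Km2_V m k) (Km2_E m k) (L0 k)"
proof
  assume "L_colorable (Km2_V m k) (Km2_E m k) (L0 k)"
  then obtain \<psi> where col: "\<forall>v\<in>Km2_V m k. \<psi> v \<in> L0 k v"
    and pr: "\<forall>u v. {u, v} \<in> Km2_E m k \<longrightarrow> \<psi> u \<noteq> \<psi> v"
    unfolding L_colorable_def proper_L_coloring_def by blast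
  have adj: "\<psi> u \<noteq> \<psi> v" if "u \<in> Km2_V m k" "v \<in> Km2_V m k" "fst u \<noteq> fst v" for u v
    using pr edgeI[OF that] by blast
  let ?X = "(\<lambda>j. (j, 0::nat)) ` {1..k-1}"
  have XV: "?X \<subseteq> Km2_V m k" using k by auto
  have inj: "inj_on \<psi> ?X"
  proof (rule inj_onI)
    fix u v assume u: "u \<in> ?X" and v: "v \<in> ?X" and e: "\<psi> u = \<psi> v"
    from u obtain a where a: "a \<in> {1..k-1}" "u = (a, 0)" by blast
    from v obtain b where b: "b \<in> {1..k-1}" "v = (b, 0)" by blast
    show "u = v"
    proof (rule ccontr)
      assume "u \<noteq> v"
      then have "fst u \<noteq> fst v" using a b by simp
      moreover have "u \<in> Km2_V m k" "v \<in> Km2_V m k" using u v XV by blast+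
      ultimately show False using adj e by blast
    qed
  qed
  have img: "\<psi> ` ?X \<subseteq> {1..k-1}"
  proof
    fix c assume "c \<in> \<psi> ` ?X"
    then obtain j where j: "j \<in> {1..k-1}" "c = \<psi> (j, 0)" by auto
    then have "(j, 0) \<in> Km2_V m k" using k by auto
    then have "\<psi> (j, 0) \<in> L0 k (j, 0)" using col by blast
    then show "c \<in> {1..k-1}" using j by (simp add: L0_def)
  qed
  have ij: "inj_on (\<lambda>j. (j, 0::nat)) {1..k-1}" by (simp add: inj_on_def)
  have cX: "card ?X = k - 1" using card_image[OF ij] by simp
  have cimg: "card (\<psi> ` ?X) = k - 1" using card_image[OF inj] cX by simp
  have eq: "\<psi> ` ?X = {1..k-1}"
  proof -
    have c2: "card {1..k-1::nat} = k-1" by simp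
    show ?thesis by (rule card_subset_eq[OF finite_atLeastAtMost img]) (simp only: cimg c2)
  qed
  have inX: "\<exists>j\<in>{1..k-1}. \<psi> (j, 0) = c" if "c \<in> {1..k-1}" for c
  proof -
    have "c \<in> \<psi> ` ?X" using that eq by simp
    then show ?thesis by auto
  qed
  have "(1::nat) \<in> {1..k-1}" using k by simp
  then obtain j0 where j0: "j0 \<in> {1..k-1}" "\<psi> (j0, 0) = 1" using inX by blast
  have v00: "(0, 0) \<in> Km2_V m k" "(0, 1) \<in> Km2_V m k" using m by auto
  have a00: "\<psi> (0, 0) = k"
  proof -
    have "\<psi> (0, 0) \<in> L0 k (0, 0)" using col v00 by blast
    then have "\<psi> (0, 0) \<in> {1..k}" by (simp add: L0_def)
    moreover have "\<psi> (0, 0) \<notin> {1..k-1}"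
    proof
      assume "\<psi> (0, 0) \<in> {1..k-1}"
      then obtain j where "j \<in> {1..k-1}" "\<psi> (j, 0) = \<psi> (0, 0)" using inX by blast
      then show False using adj[of "(j, 0)" "(0, 0)"] v00 k by (auto; arith)
    qed
    ultimately show ?thesis by auto
  qed
  have a01: "\<psi> (0, 1) = k + 1"
  proof -
    have "\<psi> (0, 1) \<in> L0 k (0, 1)" using col v00 by blast
    then have "\<psi> (0, 1) \<in> insert (k+1) {1..k-1}" by (simp add: L0_def)
    moreover have "\<psi> (0, 1) \<notin> {1..k-1}"
    proof
      assume "\<psi> (0, 1) \<in> {1..k-1}"
      then obtain j where "j \<in> {1..k-1}" "\<psi> (j, 0) = \<psi> (0, 1)" using inX by blast
      then show False using adj[of "(j, 0)" "(0, 1)"] v00 k by (auto; arith)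
    qed
    ultimately show ?thesis by auto
  qed
  have vj1: "(j0, 1) \<in> Km2_V m k" using j0 k by auto
  have "\<psi> (j0, 1) \<in> L0 k (j0, 1)" using col vj1 by blast
  then have "\<psi> (j0, 1) \<in> {2..k+1}" using j0 by (simp add: L0_def)
  moreover have "\<psi> (j0, 1) \<noteq> k" using adj[of "(j0, 1)" "(0, 0)"] vj1 v00 a00 j0 by (auto; arith)
  moreover have "\<psi> (j0, 1) \<noteq> k + 1" using adj[of "(j0, 1)" "(0, 1)"] vj1 v00 a01 j0 by (auto; arith)
  ultimately have "\<psi> (j0, 1) \<in> {1..k-1}" "\<psi> (j0, 1) \<noteq> 1" by auto
  then obtain i where i: "i \<in> {1..k-1}" "\<psi> (i, 0) = \<psi> (j0, 1)" using inX by blast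
  then have "i \<noteq> j0" using j0 \<open>\<psi> (j0, 1) \<noteq> 1\<close> by auto
  then show False using adj[of "(i, 0)" "(j0, 1)"] i vj1 k by (auto; arith)
qed


lemma L0_hall:
  assumes m: "m \<ge> 2" and k: "k \<ge> 2"
  shows "hall_condition (Km2_V m k) (Km2_E m k) (L0 k)"
  unfolding hall_condition_def
proof (intro allI impI)
  fix W F assume "subgraph W F (Km2_V m k) (Km2_E m k)"
  then have W: "W \<subseteq> Km2_V m k" and F: "F \<subseteq> Km2_E m k" by (auto simp: subgraph_def)
  have fin: "\<forall>v\<in>W. finite (L0 k v)" by (simp add: L0_def)
  have fW: "finite W" by (rule finite_subset[OF W finite_V])
  let ?U = "\<Union>v\<in>W. L0 k v"
  let ?a = "\<lambda>\<sigma>. indep_num (col_verts W (L0 k) \<sigma>) (col_edges W F (L0 k) \<sigma>)"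
  have inV: "(fst v = 0 \<and> snd v < m) \<or> (0 < fst v \<and> fst v < k \<and> snd v < 2)" if "v \<in> W" for v
  proof -
    have "v \<in> Km2_V m k" using that W by blast
    then show ?thesis by (simp only: mem_V')
  qed
  define g where "g j0 j = (if j < j0 then j+1 else (j::nat))" for j0 j
  show "card W \<le> sum ?a ?U"
  proof (cases "\<exists>j0 i. 1 \<le> j0 \<and> j0 < k \<and> i < 2 \<and> (j0, i) \<notin> W")
    case True
    then obtain j0 i where j0: "1 \<le> j0" "j0 < k" "i < 2" "(j0, i) \<notin> W" by blast
    show ?thesis
    proof (cases "i = 0")
      case True
      let ?\<psi> = "\<lambda>v. if fst v = 0 then 1 else if fst v = j0 then k else g j0 (fst v)"
      show ?thesis
      proof (rule hall_col[OF W F fin, of ?\<psi>])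
        show "\<forall>v\<in>W. ?\<psi> v \<in> L0 k v"
        proof
          fix v assume v: "v \<in> W"
          have "v \<noteq> (j0, 0)" using v j0 True by auto
          then show "?\<psi> v \<in> L0 k v" using inV[OF v] j0 k by (cases v) (auto simp: L0_def g_def)
        qed
        show "\<forall>u\<in>W. \<forall>v\<in>W. fst u \<noteq> fst v \<longrightarrow> ?\<psi> u \<noteq> ?\<psi> v"
        proof (intro ballI impI)
          fix u v assume u: "u \<in> W" and v: "v \<in> W" and d: "fst u \<noteq> fst v"
          show "?\<psi> u \<noteq> ?\<psi> v" using inV[OF u] inV[OF v] d j0 k by (auto simp: g_def)
        qed
      qed
    next
      case False
      then have i1: "(j0, 1) \<notin> W" using j0 by (cases i) auto
      let ?\<psi> = "\<lambda>v. if fst v = 0 then (if snd v = 0 then k else k+1) else if fst v = j0 then 1 else g j0 (fst v)"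
      show ?thesis
      proof (rule hall_col[OF W F fin, of ?\<psi>])
        show "\<forall>v\<in>W. ?\<psi> v \<in> L0 k v"
        proof
          fix v assume v: "v \<in> W"
          have "v \<noteq> (j0, 1)" using v i1 by auto
          then show "?\<psi> v \<in> L0 k v" using inV[OF v] j0 k by (cases v) (auto simp: L0_def g_def)
        qed
        show "\<forall>u\<in>W. \<forall>v\<in>W. fst u \<noteq> fst v \<longrightarrow> ?\<psi> u \<noteq> ?\<psi> v"
        proof (intro ballI impI)
          fix u v assume u: "u \<in> W" and v: "v \<in> W" and d: "fst u \<noteq> fst v"
          show "?\<psi> u \<noteq> ?\<psi> v" using inV[OF u] inV[OF v] d j0 k by (auto simp: g_def)
        qed
      qed
    qed
  next
    case False
    then have all: "(j, i) \<in> W" if "1 \<le> j" "j < k" "i < 2" for j i using that by blast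
    show ?thesis
    proof (cases "(0, 0) \<in> W")
      case False
      let ?\<psi> = "\<lambda>v. if fst v = 0 then k+1 else if fst v = 1 then (if snd v = 0 then 1 else k) else fst v"
      show ?thesis
      proof (rule hall_col[OF W F fin, of ?\<psi>])
        show "\<forall>v\<in>W. ?\<psi> v \<in> L0 k v"
        proof
          fix v assume v: "v \<in> W"
          have "v \<noteq> (0, 0)" using v False by auto
          then show "?\<psi> v \<in> L0 k v" using inV[OF v] k by (cases v) (auto simp: L0_def)
        qed
        show "\<forall>u\<in>W. \<forall>v\<in>W. fst u \<noteq> fst v \<longrightarrow> ?\<psi> u \<noteq> ?\<psi> v"
        proof (intro ballI impI)
          fix u v assume u: "u \<in> W" and v: "v \<in> W" and d: "fst u \<noteq> fst v"
          show "?\<psi> u \<noteq> ?\<psi> v" using inV[OF u] inV[OF v] d k by auto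
        qed
      qed
    next
      case True
      note w00 = True
      show ?thesis
      proof (cases "\<exists>i. 1 \<le> i \<and> i < m \<and> (0, i) \<in> W")
        case False
        let ?\<psi> = "\<lambda>v. if fst v = 0 then k else if fst v = 1 then (if snd v = 0 then 1 else k+1) else fst v"
        show ?thesis
        proof (rule hall_col[OF W F fin, of ?\<psi>])
          show "\<forall>v\<in>W. ?\<psi> v \<in> L0 k v"
          proof
            fix v assume v: "v \<in> W"
            have "fst v = 0 \<Longrightarrow> snd v = 0"
            proof (rule ccontr)
              assume "fst v = 0" "snd v \<noteq> 0"
              then have "1 \<le> snd v \<and> snd v < m \<and> (0, snd v) \<in> W" using inV[OF v] v by (cases v) auto
              then show False using False by blast
            qed
            then show "?\<psi> v \<in> L0 k v" using inV[OF v] k by (cases v) (auto simp: L0_def)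
          qed
          show "\<forall>u\<in>W. \<forall>v\<in>W. fst u \<noteq> fst v \<longrightarrow> ?\<psi> u \<noteq> ?\<psi> v"
          proof (intro ballI impI)
            fix u v assume u: "u \<in> W" and v: "v \<in> W" and d: "fst u \<noteq> fst v"
            show "?\<psi> u \<noteq> ?\<psi> v" using inV[OF u] inV[OF v] d k by auto
          qed
        qed
      next
        case True
        then obtain i1 where i1: "1 \<le> i1" "i1 < m" "(0, i1) \<in> W" by blast
        let ?W0 = "{v\<in>W. fst v = 0}"
        have fW0: "finite ?W0" by (rule finite_subset[OF _ fW]) auto
        have c0: "2 \<le> card ?W0"
        proof -
          have sub: "{(0, 0), (0, i1)} \<subseteq> ?W0" using w00 i1 by simp
          have "card {(0::nat, 0::nat), (0, i1)} = 2" using i1 by simp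
          moreover have "card {(0::nat, 0::nat), (0, i1)} \<le> card ?W0" by (rule card_mono[OF fW0 sub])
          ultimately show ?thesis by linarith
        qed
        have cW: "card W \<le> card ?W0 + (k - 1) * 2"
        proof -
          have "W \<subseteq> ?W0 \<union> ({1..<k} \<times> {0..<2})"
          proof
            fix v assume v: "v \<in> W"
            show "v \<in> ?W0 \<union> ({1..<k} \<times> {0..<2})" using inV[OF v] v by (cases v) auto
          qed
          then have "card W \<le> card (?W0 \<union> ({1..<k} \<times> {0..<2}))" by (rule card_mono[rotated]) (simp add: fW0)
          also have "\<dots> \<le> card ?W0 + card ({1..<k} \<times> {0..<(2::nat)})" by (rule card_Un_le)
          also have "\<dots> = card ?W0 + (k - 1) * 2" by (simp add: card_cartesian_product)
          finally show ?thesis .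
        qed
        have w11: "(1, 1) \<in> W" using all k by simp
        have U1: "{1..k-1} \<subseteq> ?U"
        proof -
          have "{1..k-1} \<subseteq> L0 k (0, 0)" by (auto simp: L0_def)
          then show ?thesis using w00 by blast
        qed
        have U2: "{k, k+1} \<subseteq> ?U"
        proof -
          have "{k, k+1} \<subseteq> L0 k (1, 1)" using k by (auto simp: L0_def)
          then show ?thesis using w11 by blast
        qed
        have fU: "finite ?U" using fW fin by auto
        have s1: "(k - 1) * card ?W0 \<le> (\<Sum>\<sigma>\<in>{1..k-1}. ?a \<sigma>)"
        proof -
          have "(\<Sum>\<sigma>\<in>{1..k-1}. card ?W0) \<le> (\<Sum>\<sigma>\<in>{1..k-1}. ?a \<sigma>)"
          proof (rule sum_mono)
            fix \<sigma> :: nat assume s: "\<sigma> \<in> {1..k-1}"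
            show "card ?W0 \<le> ?a \<sigma>"
            proof (rule indep_le)
              show "finite (col_verts W (L0 k) \<sigma>)" using fW by (simp add: col_verts_def)
              show "?W0 \<subseteq> col_verts W (L0 k) \<sigma>" using s by (auto simp: col_verts_def L0_def)
              show "independent (col_edges W F (L0 k) \<sigma>) ?W0" by (rule same_part_indep[OF F]) auto
            qed
          qed
          then show ?thesis by simp
        qed
        have one: "1 \<le> ?a \<sigma>" if "\<sigma> \<in> {k, k+1}" for \<sigma>
        proof -
          have "card {(1::nat, 1::nat)} \<le> ?a \<sigma>"
          proof (rule indep_le)
            show "finite (col_verts W (L0 k) \<sigma>)" using fW by (simp add: col_verts_def)
            show "{(1, 1)} \<subseteq> col_verts W (L0 k) \<sigma>" using that w11 k by (auto simp: col_verts_def L0_def)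
            show "independent (col_edges W F (L0 k) \<sigma>) {(1, 1)}" by (rule same_part_indep[OF F]) auto
          qed
          then show ?thesis by simp
        qed
        have s2: "2 \<le> (\<Sum>\<sigma>\<in>{k, k+1}. ?a \<sigma>)"
          using one[of k] one[of "k+1"] by simp
        have "(\<Sum>\<sigma>\<in>{1..k-1}. ?a \<sigma>) + (\<Sum>\<sigma>\<in>{k, k+1}. ?a \<sigma>) = (\<Sum>\<sigma>\<in>{1..k-1} \<union> {k, k+1}. ?a \<sigma>)"
          by (rule sum.union_disjoint[symmetric]) auto
        also have "\<dots> \<le> sum ?a ?U"
          by (rule sum_mono2[OF fU]) (use U1 U2 in auto)
        finally have big: "(k - 1) * card ?W0 + 2 \<le> sum ?a ?U" using s1 s2 by linarith
        obtain n where n: "k = n + 2" using k by (metis add.commute le_add_diff_inverse)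
        have "n * 2 \<le> n * card ?W0" using c0 by simp
        moreover have "(k - 1) * card ?W0 = n * card ?W0 + card ?W0" using n by (simp add: algebra_simps)
        moreover have "(k - 1) * 2 = n * 2 + 2" using n by simp
        ultimately have "card ?W0 + (k - 1) * 2 \<le> (k - 1) * card ?W0 + 2" by linarith
        then show ?thesis using cW big by linarith
      qed
    qed
  qed
qed

lemma L0_ge:
  assumes "n \<le> k - 1"
  shows "list_assignment_ge V (L0 k) n"
  unfolding list_assignment_ge_def
proof (intro ballI conjI)
  fix v assume "v \<in> V"
  show "finite (L0 k v)" by (simp add: L0_def)
  have c: "k - 1 \<le> card (L0 k v)" by (auto simp: L0_def)
  then show "n \<le> card (L0 k v)" using assms by linarith
qed

lemma notP0:
  assumes "m \<ge> 1"
  shows "\<not> (\<forall>L. list_assignment_ge (Km2_V m k) L 0 \<longrightarrow> L_colorable (Km2_V m k) (Km2_E m k) L)"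
proof
  assume P0: "\<forall>L. list_assignment_ge (Km2_V m k) L 0 \<longrightarrow> L_colorable (Km2_V m k) (Km2_E m k) L"
  have "list_assignment_ge (Km2_V m k) (\<lambda>_. {}) 0" by (simp add: list_assignment_ge_def)
  then have "L_colorable (Km2_V m k) (Km2_E m k) (\<lambda>_. {})" using P0 by blast
  then obtain \<psi> where "\<forall>v\<in>Km2_V m k. \<psi> v \<in> {}"
    unfolding L_colorable_def proper_L_coloring_def by blast
  moreover have "(0, 0) \<in> Km2_V m k" using assms by simp
  ultimately show False by blast
qed

lemma QP:
  assumes m: "m \<ge> 2" and k: "k \<ge> 2"
    and Q: "\<forall>L. hall_condition (Km2_V m k) (Km2_E m k) L \<and> list_assignment_ge (Km2_V m k) L n
              \<longrightarrow> L_colorable (Km2_V m k) (Km2_E m k) L"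
  shows "\<forall>L. list_assignment_ge (Km2_V m k) L n \<longrightarrow> L_colorable (Km2_V m k) (Km2_E m k) L"
proof (cases "k \<le> n")
  case True
  show ?thesis
  proof (intro allI impI)
    fix L assume L: "list_assignment_ge (Km2_V m k) L n"
    then have "list_assignment_ge (Km2_V m k) L k" using True by (auto simp: list_assignment_ge_def)
    then have "hall_condition (Km2_V m k) (Km2_E m k) L" using hall_auto[of k m L] k by simp
    then show "L_colorable (Km2_V m k) (Km2_E m k) L" using Q L by blast
  qed
next
  case False
  then have hk: "n \<le> k - 1" by simp
  have "list_assignment_ge (Km2_V m k) (L0 k) n" by (rule L0_ge[OF hk])
  moreover have "hall_condition (Km2_V m k) (Km2_E m k) (L0 k)" by (rule L0_hall[OF m k])
  ultimately have "L_colorable (Km2_V m k) (Km2_E m k) (L0 k)" using Q by blast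
  moreover have "\<not> L_colorable (Km2_V m k) (Km2_E m k) (L0 k)" by (rule L0_uncol[OF m k])
  ultimately show ?thesis by blast
qed

theorem corollary4:
  fixes m k :: nat
  assumes "m \<ge> 2" and "k \<ge> 2"
  shows "hall_number (Km2_V m k) (Km2_E m k) = choice_number (Km2_V m k) (Km2_E m k)"
proof -
  have eq: "(0 < n \<and> (\<forall>L. hall_condition (Km2_V m k) (Km2_E m k) L \<and> list_assignment_ge (Km2_V m k) L n
              \<longrightarrow> L_colorable (Km2_V m k) (Km2_E m k) L))
        = (\<forall>L. list_assignment_ge (Km2_V m k) L n \<longrightarrow> L_colorable (Km2_V m k) (Km2_E m k) L)" for n
  proof (cases "n = 0")
    case True
    then show ?thesis using notP0[of m k] assms by simp
  next
    case False
    then show ?thesis using QP[OF assms, of n] by blast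
  qed
  show ?thesis unfolding hall_number_def choice_number_def eq ..
qed

end
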